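(* Let $d\in\mathbb{N}$ and let $(A,B),(C,D)$ be pairs of complex $d\times d$ matrices with $\operatorname{diag}(A)=\operatorname{diag}(B)$ and $\operatorname{diag}(C)=\operatorname{diag}(D)$. Suppose that, for $i=1,2$, the linear maps $\Phi^{(i)}_{(A,B)}$ and $\Phi^{(i)}_{(C,D)}$ on $\mathcal{M}_d(\mathbb{C})$ are PPT. Then for all $i,j\in\{1,2\}$ the composition $\Phi^{(i)}_{(A,B)}\circ\Phi^{(j)}_{(C,D)}$ is entanglement breaking.
   Context: $\mathcal{M}_d(\mathbb{C})$ denotes the complex $d\times d$ matrices, $\odot$ the entrywise (Hadamard) product, $X^\top$ the transpose in the standard basis, $\operatorname{diag}(X)$ both the column vector of diagonal entries of $X$ (written $|\operatorname{diag}X\rangle$) and, for a vector $v$, $\operatorname{diag}(v)$ is the diagonal matrix with diagonal $v$; for a matrix $B$, $\operatorname{diag}B$ denotes the diagonal matrix with the same diagonal as $B$ and $\widetilde B=B-\operatorname{diag}B$. For a pair $(A,B)$ with equal diagonals, define $\Phi^{(1)}_{(A,B)}(X)=\operatorname{diag}(A|\operatorname{diag}X\rangle)+\widetilde B\odot X^\top$ and $\Phi^{(2)}_{(A,B)}(X)=\operatorname{diag}(A|\operatorname{diag}X\rangle)+\widetilde B\odot X$. A linear map $\Phi:\mathcal{M}_d(\mathbb{C})\to\mathcal{M}_d(\mathbb{C})$ is completely positive if $\mathrm{id}_n\otimes\Phi$ maps positive semidefinite matrices to positive semidefinite matrices for all $n$; completely copositive if $\Phi\circ\top$ is completely positive;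 PPT if it is both completely positive and completely copositive. $\Phi$ is entanglement breaking if $(\mathrm{id}\otimes\Phi)(X)$ is separable (in the convex hull of $P\otimes Q$ with $P,Q$ positive semidefinite) for every positive semidefinite $X\in\mathcal{M}_d(\mathbb{C})\otimes\mathcal{M}_d(\mathbb{C})$. *)

theory Defs
  imports Complex_Main "HOL-Library.Complex_Order"
begin

text \<open>A complex d x d matrix is represented as a function nat => nat => complex;
  only the entries with both indices below d are relevant.\<close>

type_synonym cmat = "nat \<Rightarrow> nat \<Rightarrow> complex"

text \<open>Positive semidefiniteness on an index set I (complex order: 0 <= z means z
  real and nonnegative; over C this also forces hermiticity).\<close>
definition psd_on :: "'i set \<Rightarrow> ('i \<Rightarrow> 'i \<Rightarrow> complex) \<Rightarrow> bool" where
  "psd_on I M \<longleftrightarrow> (\<forall>v :: 'i \<Rightarrow> complex. 0 \<le> (\<Sum>i\<in>I. \<Sum>j\<in>I. cnj (v i) * M i j * v j))"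

definition Phi1 :: "nat \<Rightarrow> cmat \<Rightarrow> cmat \<Rightarrow> cmat \<Rightarrow> cmat" where
  "Phi1 d A B X = (\<lambda>i j. if i = j then (\<Sum>k<d. A i k * X k k) else B i j * X j i)"

definition Phi2 :: "nat \<Rightarrow> cmat \<Rightarrow> cmat \<Rightarrow> cmat \<Rightarrow> cmat" where
  "Phi2 d A B X = (\<lambda>i j. if i = j then (\<Sum>k<d. A i k * X k k) else B i j * X i j)"

text \<open>Matrices in M_n tensor M_d, indexed by pairs (i,a) with i < n, a < d.
  The amplification id_n tensor Phi acts blockwise.\<close>
definition ampl :: "nat \<Rightarrow> (cmat \<Rightarrow> cmat) \<Rightarrow> (nat \<times> nat \<Rightarrow> nat \<times> nat \<Rightarrow> complex)
                     \<Rightarrow> (nat \<times> nat \<Rightarrow> nat \<times> nat \<Rightarrow> complex)" where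
  "ampl d \<Phi> X = (\<lambda>(i, a) (j, b).
      \<Phi> (\<lambda>a' b'. if a' < d \<and> b' < d then X (i, a') (j, b') else 0) a b)"

definition transp :: "cmat \<Rightarrow> cmat" where
  "transp X = (\<lambda>i j. X j i)"

definition completely_positive :: "nat \<Rightarrow> (cmat \<Rightarrow> cmat) \<Rightarrow> bool" where
  "completely_positive d \<Phi> \<longleftrightarrow>
     (\<forall>n X. psd_on ({..<n} \<times> {..<d}) X \<longrightarrow> psd_on ({..<n} \<times> {..<d}) (ampl d \<Phi> X))"

definition completely_copositive :: "nat \<Rightarrow> (cmat \<Rightarrow> cmat) \<Rightarrow> bool" where
  "completely_copositive d \<Phi> \<longleftrightarrow> completely_positive d (\<Phi> \<circ> transp)"

definition PPT :: "nat \<Rightarrow> (cmat \<Rightarrow> cmat) \<Rightarrow> bool" where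
  "PPT d \<Phi> \<longleftrightarrow> completely_positive d \<Phi> \<and> completely_copositive d \<Phi>"

definition separable :: "nat \<Rightarrow> (nat \<times> nat \<Rightarrow> nat \<times> nat \<Rightarrow> complex) \<Rightarrow> bool" where
  "separable d X \<longleftrightarrow>
     (\<exists>(k::nat) (w::nat \<Rightarrow> real) (P::nat \<Rightarrow> cmat) (Q::nat \<Rightarrow> cmat).
        (\<forall>l<k. w l \<ge> 0 \<and> psd_on {..<d} (P l) \<and> psd_on {..<d} (Q l)) \<and>
        (\<Sum>l<k. w l) = 1 \<and>
        (\<forall>i<d. \<forall>a<d. \<forall>j<d. \<forall>b<d.
            X (i, a) (j, b) = (\<Sum>l<k. complex_of_real (w l) * P l i j * Q l a b)))"

definition entanglement_breaking :: "nat \<Rightarrow> (cmat \<Rightarrow> cmat) \<Rightarrow> bool" where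
  "entanglement_breaking d \<Phi> \<longleftrightarrow>
     (\<forall>X. psd_on ({..<d} \<times> {..<d}) X \<longrightarrow> separable d (ampl d \<Phi> X))"

end

theory Submission
  imports Defs
begin

definition qf :: "nat \<Rightarrow> (nat \<Rightarrow> complex) \<Rightarrow> cmat \<Rightarrow> complex" where
  "qf d r Y = (\<Sum>e<d. \<Sum>c<d. cnj (r e) * Y e c * r c)"

definition EBf :: "nat \<Rightarrow> (cmat \<Rightarrow> cmat) \<Rightarrow> bool" where
  "EBf d \<Phi> \<longleftrightarrow> (\<exists>L :: ((nat \<Rightarrow> complex) \<times> (nat \<Rightarrow> complex)) list.
     \<forall>Y a b. a < d \<longrightarrow> b < d \<longrightarrow>
       \<Phi> Y a b = (\<Sum>p\<leftarrow>L. qf d (fst p) Y * snd p a * cnj (snd p b)))"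

lemma EBf_cong:
  assumes "EBf d \<Phi>" "\<And>Y a b. a < d \<Longrightarrow> b < d \<Longrightarrow> \<Psi> Y a b = \<Phi> Y a b"
  shows "EBf d \<Psi>"
proof -
  obtain L where 1: "\<forall>Y a b. a < d \<longrightarrow> b < d \<longrightarrow>
       \<Phi> Y a b = (\<Sum>p\<leftarrow>L. qf d (fst p) Y * snd p a * cnj (snd p b))"
    using assms(1) unfolding EBf_def by blast
  show ?thesis unfolding EBf_def
    by (rule exI[of _ L]) (simp add: 1 assms(2))
qed

lemma EBf_zero: "EBf d (\<lambda>Y a b. 0)"
  unfolding EBf_def by (rule exI[of _ "[]"]) simp

lemma EBf_add:
  assumes "EBf d \<Phi>" "EBf d \<Psi>"
  shows "EBf d (\<lambda>Y a b. \<Phi> Y a b + \<Psi> Y a b)"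
proof -
  obtain L1 where 1: "\<forall>Y a b. a < d \<longrightarrow> b < d \<longrightarrow>
       \<Phi> Y a b = (\<Sum>p\<leftarrow>L1. qf d (fst p) Y * snd p a * cnj (snd p b))"
    using assms(1) unfolding EBf_def by blast
  obtain L2 where 2: "\<forall>Y a b. a < d \<longrightarrow> b < d \<longrightarrow>
       \<Psi> Y a b = (\<Sum>p\<leftarrow>L2. qf d (fst p) Y * snd p a * cnj (snd p b))"
    using assms(2) unfolding EBf_def by blast
  show ?thesis unfolding EBf_def
    by (rule exI[of _ "L1 @ L2"]) (simp add: 1 2)
qed

lemma EBf_sum:
  assumes "finite S" "\<And>s. s \<in> S \<Longrightarrow> EBf d (\<Phi> s)"
  shows "EBf d (\<lambda>Y a b. \<Sum>s\<in>S. \<Phi> s Y a b)"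
  using assms
proof (induction S rule: finite_induct)
  case empty
  then show ?case using EBf_zero by simp
next
  case (insert x F)
  have "EBf d (\<lambda>Y a b. \<Phi> x Y a b + (\<Sum>s\<in>F. \<Phi> s Y a b))"
    using insert by (intro EBf_add) auto
  then show ?case using insert by simp
qed

lemma EBf_single: "EBf d (\<lambda>Y a b. qf d r Y * q a * cnj (q b))"
  unfolding EBf_def by (rule exI[of _ "[(r,q)]"]) simp

lemma EBf_transp:
  assumes "EBf d \<Phi>"
  shows "EBf d (\<lambda>Y a b. \<Phi> Y b a)"
proof -
  obtain L where 1: "\<forall>Y a b. a < d \<longrightarrow> b < d \<longrightarrow>
       \<Phi> Y a b = (\<Sum>p\<leftarrow>L. qf d (fst p) Y * snd p a * cnj (snd p b))"
    using assms(1) unfolding EBf_def by blast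
  show ?thesis unfolding EBf_def
    apply (rule exI[of _ "map (\<lambda>p. (fst p, \<lambda>i. cnj (snd p i))) L"])
    apply (simp add: 1 o_def)
    apply (intro allI impI arg_cong[where f=sum_list] map_cong refl)
    by (simp add: mult_ac)
qed

lemma cnj_nonneg: "0 \<le> s * cnj (s::complex)"
  by (simp only: complex_mult_cnj) (simp add: less_eq_complex_def)

lemma psd_rank1: fixes q :: "nat \<Rightarrow> complex" shows "psd_on {..<d} (\<lambda>a b. q a * cnj (q b))"
  unfolding psd_on_def
proof
  fix v :: "nat \<Rightarrow> complex"
  have eq: "(\<Sum>i<d. \<Sum>j<d. cnj (v i) * (q i * cnj (q j)) * v j)
     = (\<Sum>i<d. cnj (v i) * q i) * cnj (\<Sum>j<d. cnj (v j) * q j)"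
    unfolding cnj_sum sum_product by (intro sum.cong refl) (simp add: mult_ac)
  show "0 \<le> (\<Sum>i<d. \<Sum>j<d. cnj (v i) * (q i * cnj (q j)) * v j)"
    unfolding eq by (rule cnj_nonneg)
qed

lemma sum2:
  assumes "finite I" "x \<in> I" "y \<in> I" "x \<noteq> y" "\<And>k. k \<in> I \<Longrightarrow> k \<noteq> x \<Longrightarrow> k \<noteq> y \<Longrightarrow> f k = 0"
  shows "sum f I = f x + f y"
proof -
  have "sum f I = sum f {x, y}"
    by (rule sum.mono_neutral_right) (use assms in auto)
  then show ?thesis using assms(4) by simp
qed

lemma quad2:
  fixes M :: "'i \<Rightarrow> 'i \<Rightarrow> complex"
  assumes "finite I" "x \<in> I" "y \<in> I" "x \<noteq> y"
  shows "(\<Sum>i\<in>I. \<Sum>j\<in>I. cnj ((\<lambda>k. if k = x then \<alpha> else if k = y then \<beta> else 0) i) * M i j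
            * (\<lambda>k. if k = x then \<alpha> else if k = y then \<beta> else 0) j)
       = cnj \<alpha> * M x x * \<alpha> + cnj \<alpha> * M x y * \<beta> + cnj \<beta> * M y x * \<alpha> + cnj \<beta> * M y y * \<beta>"
proof -
  define v where "v = (\<lambda>k. if k = x then \<alpha> else if k = y then \<beta> else 0)"
  have vx: "v x = \<alpha>" and vy: "v y = \<beta>" using assms(4) by (auto simp: v_def)
  have v0: "\<And>k. k \<noteq> x \<Longrightarrow> k \<noteq> y \<Longrightarrow> v k = 0" by (simp add: v_def)
  have inner: "(\<Sum>j\<in>I. cnj (v i) * M i j * v j) = cnj (v i) * M i x * \<alpha> + cnj (v i) * M i y * \<beta>" for i
    by (subst sum2[OF assms]) (auto simp: v0 vx vy)
  have "(\<Sum>i\<in>I. \<Sum>j\<in>I. cnj (v i) * M i j * v j)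
       = cnj \<alpha> * M x x * \<alpha> + cnj \<alpha> * M x y * \<beta> + cnj \<beta> * M y x * \<alpha> + cnj \<beta> * M y y * \<beta>"
    unfolding inner by (subst sum2[OF assms]) (auto simp: v0 vx vy algebra_simps)
  then show ?thesis unfolding v_def .
qed

lemma sum1:
  assumes "finite I" "x \<in> I" "\<And>k. k \<in> I \<Longrightarrow> k \<noteq> x \<Longrightarrow> f k = 0"
  shows "sum f I = f x"
proof -
  have "sum f I = sum f {x}"
    by (rule sum.mono_neutral_right) (use assms in auto)
  then show ?thesis by simp
qed

lemma psd1:
  fixes M :: "'i \<Rightarrow> 'i \<Rightarrow> complex"
  assumes "psd_on I M" "finite I" "x \<in> I"
  shows "0 \<le> M x x"
proof -
  define v :: "'i \<Rightarrow> complex" where "v = (\<lambda>k. if k = x then 1 else 0)"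
  have inner: "(\<Sum>j\<in>I. cnj (v i) * M i j * v j) = cnj (v i) * M i x" for i
    by (subst sum1[OF assms(2,3)]) (auto simp: v_def)
  have "(\<Sum>i\<in>I. \<Sum>j\<in>I. cnj (v i) * M i j * v j) = M x x"
    unfolding inner by (subst sum1[OF assms(2,3)]) (auto simp: v_def)
  then show ?thesis using assms(1) unfolding psd_on_def by metis
qed

lemma disc:
  fixes p q n :: real
  assumes "p \<ge> 0" "q \<ge> 0" "n \<ge> 0" "\<And>s. 0 \<le> s*s*p - 2*s*n + n*q"
  shows "n \<le> p * q"
proof (cases "p > 0")
  case True
  have "0 \<le> (n/p)*(n/p)*p - 2*(n/p)*n + n*q" by (rule assms(4))
  also have "(n/p)*(n/p)*p - 2*(n/p)*n + n*q = n * (q - n/p)"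
    using True by (simp add: field_simps power2_eq_square)
  finally have h: "0 \<le> n * (q - n/p)" .
  show ?thesis
  proof (cases "n = 0")
    case True then show ?thesis using assms by simp
  next
    case False
    then have "n > 0" using assms(3) by simp
    then have "n/p \<le> q" using h by (simp add: zero_le_mult_iff)
    then show ?thesis using \<open>p>0\<close> by (simp add: divide_le_eq mult.commute)
  qed
next
  case False
  then have p0: "p = 0" using assms(1) by simp
  have "0 \<le> (q+1)*(q+1)*p - 2*(q+1)*n + n*q" by (rule assms(4))
  then have "0 \<le> - n * (q + 2)" using p0 by (simp add: algebra_simps)
  then have "n \<le> 0" using assms(2) by (simp add: mult_le_0_iff)
  then show ?thesis using assms p0 by simp
qed

lemma psd2:
  fixes M :: "'i \<Rightarrow> 'i \<Rightarrow> complex"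
  assumes psd: "psd_on I M" and fin: "finite I" and xy: "x \<in> I" "y \<in> I" "x \<noteq> y"
  shows "M y x = cnj (M x y)" "(cmod (M x y))^2 \<le> Re (M x x) * Re (M y y)"
proof -
  have Q: "0 \<le> cnj \<alpha> * M x x * \<alpha> + cnj \<alpha> * M x y * \<beta> + cnj \<beta> * M y x * \<alpha> + cnj \<beta> * M y y * \<beta>" for \<alpha> \<beta>
  proof -
    have "0 \<le> (\<Sum>i\<in>I. \<Sum>j\<in>I. cnj ((\<lambda>k. if k = x then \<alpha> else if k = y then \<beta> else 0) i) * M i j
            * (\<lambda>k. if k = x then \<alpha> else if k = y then \<beta> else 0) j)"
      by (rule spec[OF psd[unfolded psd_on_def]])
    then show ?thesis by (simp only: quad2[OF fin xy])
  qed
  have px: "0 \<le> M x x" and py: "0 \<le> M y y" using psd1[OF psd fin] xy by auto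
  then have pxr: "M x x = of_real (Re (M x x))" and pyr: "M y y = of_real (Re (M y y))"
    by (auto simp: less_eq_complex_def complex_eq_iff)
  have "0 \<le> M x x + M x y + M y x + M y y" using Q[of 1 1] by simp
  then have i1: "Im (M x y) + Im (M y x) = 0" using px py by (simp add: less_eq_complex_def)
  have "0 \<le> M x x + \<i> * M x y - \<i> * M y x + M y y" using Q[of 1 \<i>] by (simp add: algebra_simps)
  then have i2: "Re (M x y) - Re (M y x) = 0" using px py by (simp add: less_eq_complex_def)
  show h: "M y x = cnj (M x y)" using i1 i2 by (simp add: complex_eq_iff)
  define n where "n = (cmod (M x y))^2"
  have "0 \<le> s*s*Re (M x x) - 2*s*n + n*Re (M y y)" for s
  proof -
    have "0 \<le> cnj (of_real s) * M x x * of_real s + cnj (of_real s) * M x y * (- cnj (M x y))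
       + cnj (- cnj (M x y)) * M y x * of_real s + cnj (- cnj (M x y)) * M y y * (- cnj (M x y))"
      by (rule Q)
    also have "\<dots> = of_real (s*s*Re (M x x) - 2*s*n + n*Re (M y y))"
      unfolding h n_def
      apply (subst pxr, subst pyr)
      apply (simp add: algebra_simps)
      using complex_norm_square[of "M x y"] by (simp add: algebra_simps)
    finally show ?thesis by (simp add: less_eq_complex_def)
  qed
  then show "(cmod (M x y))^2 \<le> Re (M x x) * Re (M y y)"
    unfolding n_def[symmetric]
    by (intro disc) (use px py in \<open>auto simp: less_eq_complex_def n_def\<close>)
qed

lemma sum_prod_split: "sum h (A \<times> B) = (\<Sum>x\<in>A. \<Sum>y\<in>B. h (x,y))"
  by (simp add: sum.cartesian_product)

lemma mult_double_sum:
  "(z::complex) * (\<Sum>e\<in>A. \<Sum>c\<in>B. f e c) * z' = (\<Sum>e\<in>A. \<Sum>c\<in>B. z * f e c * z')"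
  by (simp add: sum_distrib_left sum_distrib_right)

lemma psd_partial:
  fixes X :: "nat \<times> nat \<Rightarrow> nat \<times> nat \<Rightarrow> complex"
  assumes "psd_on ({..<n} \<times> {..<d}) X"
  shows "psd_on {..<n} (\<lambda>i j. qf d r (\<lambda>e c. X (i,e) (j,c)))"
  unfolding psd_on_def
proof
  fix v :: "nat \<Rightarrow> complex"
  define V where "V = (\<lambda>(i::nat,e::nat). v i * r e)"
  have eq: "(\<Sum>i<n. \<Sum>j<n. cnj (v i) * qf d r (\<lambda>e c. X (i,e) (j,c)) * v j)
      = (\<Sum>i<n. \<Sum>j<n. \<Sum>e<d. \<Sum>c<d. cnj (V (i,e)) * X (i,e) (j,c) * V (j,c))"
    unfolding qf_def mult_double_sum V_def by (intro sum.cong refl) (simp add: mult_ac)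
  also have "\<dots> = (\<Sum>i<n. \<Sum>e<d. \<Sum>j<n. \<Sum>c<d. cnj (V (i,e)) * X (i,e) (j,c) * V (j,c))"
    by (rule sum.cong[OF refl], rule sum.swap)
  also have "\<dots> = (\<Sum>p\<in>{..<n} \<times> {..<d}. \<Sum>p'\<in>{..<n} \<times> {..<d}. cnj (V p) * X p p' * V p')"
    by (simp add: sum_prod_split)
  finally have eq: "(\<Sum>i<n. \<Sum>j<n. cnj (v i) * qf d r (\<lambda>e c. X (i,e) (j,c)) * v j) = 
     (\<Sum>p\<in>{..<n} \<times> {..<d}. \<Sum>p'\<in>{..<n} \<times> {..<d}. cnj (V p) * X p p' * V p')" .
  show "0 \<le> (\<Sum>i<n. \<Sum>j<n. cnj (v i) * qf d r (\<lambda>e c. X (i,e) (j,c)) * v j)"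
    unfolding eq using assms unfolding psd_on_def by blast
qed

lemma psd_scale:
  assumes "psd_on I M" "0 \<le> (c::real)"
  shows "psd_on I (\<lambda>i j. of_real c * M i j)"
  unfolding psd_on_def
proof
  fix v :: "'a \<Rightarrow> complex"
  have "(\<Sum>i\<in>I. \<Sum>j\<in>I. cnj (v i) * (of_real c * M i j) * v j) = of_real c * (\<Sum>i\<in>I. \<Sum>j\<in>I. cnj (v i) * M i j * v j)"
  proof -
    have "(\<Sum>i\<in>I. \<Sum>j\<in>I. cnj (v i) * (of_real c * M i j) * v j) = (\<Sum>i\<in>I. \<Sum>j\<in>I. of_real c * (cnj (v i) * M i j * v j))"
      by (intro sum.cong refl) (simp add: mult_ac)
    then show ?thesis by (simp add: sum_distrib_left)
  qed
  moreover have "0 \<le> (\<Sum>i\<in>I. \<Sum>j\<in>I. cnj (v i) * M i j * v j)" using assms(1) unfolding psd_on_def by blast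
  moreover have "0 \<le> (of_real c :: complex)" using assms(2) by (simp add: less_eq_complex_def)
  ultimately show "0 \<le> (\<Sum>i\<in>I. \<Sum>j\<in>I. cnj (v i) * (of_real c * M i j) * v j)"
    by (simp add: mult_nonneg_nonneg)
qed

lemma qf_cong: "(\<And>e c. e < d \<Longrightarrow> c < d \<Longrightarrow> Y e c = Z e c) \<Longrightarrow> qf d r Y = qf d r Z"
  unfolding qf_def by (intro sum.cong refl) auto

lemma EBf_EB:
  assumes "EBf d \<Phi>"
  shows "entanglement_breaking d \<Phi>"
proof -
  obtain L0 where L0: "\<forall>Y a b. a < d \<longrightarrow> b < d \<longrightarrow>
       \<Phi> Y a b = (\<Sum>p\<leftarrow>L0. qf d (fst p) Y * snd p a * cnj (snd p b))"
    using assms unfolding EBf_def by blast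
  define L :: "((nat \<Rightarrow> complex) \<times> (nat \<Rightarrow> complex)) list" where "L = (\<lambda>_. 0, \<lambda>_. 0) # L0"
  have L: "\<Phi> Y a b = (\<Sum>p\<leftarrow>L. qf d (fst p) Y * snd p a * cnj (snd p b))" if "a < d" "b < d" for Y a b
    using L0 that by (simp add: L_def)
  define k where "k = length L"
  have k0: "k > 0" by (simp add: k_def L_def)
  show ?thesis unfolding entanglement_breaking_def
  proof (intro allI impI)
    fix X assume X: "psd_on ({..<d} \<times> {..<d}) X"
    show "separable d (ampl d \<Phi> X)" unfolding separable_def
    proof (intro exI conjI allI impI)
      let ?w = "\<lambda>l::nat. 1 / real k"
      let ?P = "\<lambda>l i j. of_real (real k) * qf d (fst (L!l)) (\<lambda>e c. X (i,e) (j,c))"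
      let ?Q = "\<lambda>l a b. snd (L!l) a * cnj (snd (L!l) b)"
      fix l assume "l < k"
      show "0 \<le> ?w l" by simp
      show "psd_on {..<d} (?P l)" by (rule psd_scale[OF psd_partial[OF X]]) simp
      show "psd_on {..<d} (?Q l)" by (rule psd_rank1)
    next
      show "(\<Sum>l<k. 1 / real k) = 1" using k0 by simp
    next
      fix i a j b assume ia: "i < d" "a < d" "j < d" "b < d"
      have "ampl d \<Phi> X (i,a) (j,b) = \<Phi> (\<lambda>a' b'. if a' < d \<and> b' < d then X (i, a') (j, b') else 0) a b"
        by (simp add: ampl_def)
      also have "\<dots> = (\<Sum>p\<leftarrow>L. qf d (fst p) (\<lambda>a' b'. if a' < d \<and> b' < d then X (i, a') (j, b') else 0) * snd p a * cnj (snd p b))"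
        using L ia by simp
      also have "\<dots> = (\<Sum>p\<leftarrow>L. qf d (fst p) (\<lambda>e c. X (i,e) (j,c)) * snd p a * cnj (snd p b))"
        by (intro arg_cong[where f=sum_list] map_cong refl arg_cong2[where f="(*)"] qf_cong) auto
      also have "\<dots> = (\<Sum>l<k. qf d (fst (L!l)) (\<lambda>e c. X (i,e) (j,c)) * snd (L!l) a * cnj (snd (L!l) b))"
        unfolding sum_list_sum_nth k_def by (simp add: atLeast0LessThan)
      also have "\<dots> = (\<Sum>l<k. complex_of_real (1 / real k) * (of_real (real k) * qf d (fst (L!l)) (\<lambda>e c. X (i,e) (j,c)))
                         * (snd (L!l) a * cnj (snd (L!l) b)))"
        using k0 by (intro sum.cong refl) (simp add: field_simps)
      finally show "ampl d \<Phi> X (i,a) (j,b) = (\<Sum>l<k. complex_of_real (1 / real k) * (of_real (real k) * qf d (fst (L!l)) (\<lambda>e c. X (i,e) (j,c)))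
                         * (snd (L!l) a * cnj (snd (L!l) b)))" .
    qed
  qed
qed

definition rv :: "nat \<Rightarrow> nat \<Rightarrow> complex \<Rightarrow> complex \<Rightarrow> nat \<Rightarrow> complex" where
  "rv i j \<alpha> \<beta> = (\<lambda>k. if k = i then \<alpha> else if k = j then \<beta> else 0)"

lemma qf_rv:
  assumes "i < d" "j < d" "i \<noteq> j"
  shows "qf d (rv i j \<alpha> \<beta>) Y = cnj \<alpha> * Y i i * \<alpha> + cnj \<alpha> * Y i j * \<beta> + cnj \<beta> * Y j i * \<alpha> + cnj \<beta> * Y j j * \<beta>"
  unfolding qf_def rv_def using assms by (subst quad2) auto

lemma GBlk:
  fixes x y :: real and w :: complex
  assumes ij: "i < d" "j < d" "i \<noteq> j"
  shows "EBf d (\<lambda>Y a b. if a = i \<and> b = i then of_real (x*x) * Y i i + of_real (y*y) * Y j j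
     else if a = j \<and> b = j then of_real (4 * (cmod w)^2) * (of_real (x*x) * Y i i + of_real (y*y) * Y j j)
     else if a = i \<and> b = j then 2 * of_real (x*y) * cnj w * Y i j
     else if a = j \<and> b = i then 2 * of_real (x*y) * w * Y j i else 0)"
  unfolding EBf_def
proof (intro exI allI impI)
  fix Y a b assume ab: "a < d" "b < d"
  let ?L = "map (\<lambda>\<theta>. (rv i j (of_real x) (\<theta> * of_real y), rv i j (1/2) (\<theta> * w))) [1, \<i>, -1, -\<i>]"
  have ww: "w * cnj w = of_real ((cmod w)^2)" by (rule complex_norm_square[symmetric])
  have ww2: "(complex_of_real (cmod w))^2 = w * cnj w" using ww by simp
  show "(if a = i \<and> b = i then of_real (x*x) * Y i i + of_real (y*y) * Y j j
     else if a = j \<and> b = j then of_real (4 * (cmod w)^2) * (of_real (x*x) * Y i i + of_real (y*y) * Y j j)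
     else if a = i \<and> b = j then 2 * of_real (x*y) * cnj w * Y i j
     else if a = j \<and> b = i then 2 * of_real (x*y) * w * Y j i else 0)
    = (\<Sum>p\<leftarrow>?L. qf d (fst p) Y * snd p a * cnj (snd p b))"
    using ij unfolding ww[symmetric]
    by (simp add: qf_rv[OF ij]) (auto simp: rv_def algebra_simps ww2)
qed

definition T2m :: "nat \<Rightarrow> cmat \<Rightarrow> cmat \<Rightarrow> cmat \<Rightarrow> cmat" where
  "T2m d M N Y a b = (if a = b then (\<Sum>m<d. M a m * Y m m) else N a b * Y a b)"

lemma qf_single:
  assumes "m < d"
  shows "qf d (\<lambda>k. if k = m then \<alpha> else 0) Y = cnj \<alpha> * Y m m * \<alpha>"
proof -
  have inner: "(\<Sum>c<d. cnj ((\<lambda>k. if k = m then \<alpha> else 0) e) * Y e c * (\<lambda>k. if k = m then \<alpha> else 0) c)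
      = cnj ((\<lambda>k. if k = m then \<alpha> else 0) e) * Y e m * \<alpha>" for e
    by (subst sum1[of _ m]) (use assms in auto)
  show ?thesis unfolding qf_def inner
    by (subst sum1[of _ m]) (use assms in auto)
qed

lemma EBf_diag_single:
  assumes "m < d" "0 \<le> (r::real)"
  shows "EBf d (\<lambda>Y a b. if a = a' \<and> b = a' then of_real r * Y m m else 0)"
proof (rule EBf_cong[OF EBf_single[of d "\<lambda>k. if k = m then of_real (sqrt r) else 0" "\<lambda>k. if k = a' then 1 else 0"]])
  fix Y a b assume "a < d" "b < d"
  have "cnj (complex_of_real (sqrt r)) * complex_of_real (sqrt r) = of_real r"
    using assms(2) by (simp flip: of_real_mult)
  then show "(if a = a' \<and> b = a' then of_real r * Y m m else 0) =
         qf d (\<lambda>k. if k = m then complex_of_real (sqrt r) else 0) Y * (if a = a' then 1 else 0) *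
         cnj (if b = a' then 1 else 0)"
    unfolding qf_single[OF assms(1)] by (auto simp: mult_ac)
qed


lemma collapse1:
  fixes d :: nat
  assumes "a < d"
  shows "(\<Sum>i<d. \<Sum>j<d. if a = i then F i j else 0) = (\<Sum>j<d. F a j)"
proof -
  have "(\<Sum>i<d. \<Sum>j<d. if a = i then F i j else 0) = (\<Sum>i<d. if a = i then (\<Sum>j<d. F i j) else 0)"
    by (intro sum.cong refl) auto
  then show ?thesis using assms by simp
qed

lemma collapse2:
  fixes d :: nat
  assumes "a < d"
  shows "(\<Sum>i<d. \<Sum>j<d. if a = j then G i j else 0) = (\<Sum>i<d. G i a)"
  using assms by simp

lemma collapse_pt:
  fixes d :: nat
  assumes "a < d" "b < d"
  shows "(\<Sum>i<d. \<Sum>j<d. if i = a \<and> j = b then c else 0) = c"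
proof -
  have "(\<Sum>i<d. \<Sum>j<d. if i = a \<and> j = b then c else 0) = (\<Sum>i<d. if i = a then (\<Sum>j<d. if j = b then c else 0) else 0)"
    by (intro sum.cong refl) auto
  then show ?thesis using assms by simp
qed

lemma core:
  fixes a' c' :: "nat \<Rightarrow> nat \<Rightarrow> real" and N :: cmat
  assumes ann: "\<And>i j. i < d \<Longrightarrow> j < d \<Longrightarrow> 0 \<le> a' i j"
      and cnn: "\<And>i j. i < d \<Longrightarrow> j < d \<Longrightarrow> 0 \<le> c' i j"
      and Nh: "\<And>i j. i < d \<Longrightarrow> j < d \<Longrightarrow> i \<noteq> j \<Longrightarrow> N j i = cnj (N i j)"
      and N1: "\<And>i j. i < d \<Longrightarrow> j < d \<Longrightarrow> i \<noteq> j \<Longrightarrow> (cmod (N i j))^2 \<le> a' i j * a' j i * (c' i j * c' j i)"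
      and N2: "\<And>i j. i < d \<Longrightarrow> j < d \<Longrightarrow> i \<noteq> j \<Longrightarrow> (cmod (N i j))^2 \<le> a' i i * a' j j * (c' i j * c' j i)"
  shows "EBf d (T2m d (\<lambda>a m. of_real (\<Sum>k<d. a' a k * c' k m)) N)"
proof -
  define z where "z i j = (if i < j then N i j else 0)" for i j
  define lam where "lam i j = (if z i j = 0 then 0 else a' i j * c' j i)" for i j
  define mu where "mu i j = (if z i j = 0 then 0 else a' i i * c' i j)" for i j
  define nu where "nu i j = (cmod (z i j))^2 / mu i j" for i j
  define rho where "rho i j = (cmod (z i j))^2 / lam i j" for i j
  define Blk where "Blk i j Y a b = (if a = i \<and> b = i then of_real (lam i j) * Y i i + of_real (mu i j) * Y j j
     else if a = j \<and> b = j then of_real (nu i j) * Y i i + of_real (rho i j) * Y j j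
     else if a = i \<and> b = j then z i j * Y i j
     else if a = j \<and> b = i then cnj (z i j) * Y j i else 0)" for i j and Y :: cmat and a b
  define U where "U a m = (if a = m then (\<Sum>j<d. lam a j) + (\<Sum>i<d. rho i a) else 0) + mu a m + nu m a" for a m
  define R where "R a m = (\<Sum>k<d. a' a k * c' k m) - U a m" for a m
  define Res where "Res Y a b = (if a = b then (\<Sum>m<d. of_real (R a m) * Y m m) else 0)" for Y :: cmat and a b

  have zero_cases: "lam i j = 0 \<and> mu i j = 0 \<and> nu i j = 0 \<and> rho i j = 0" if "z i j = 0" for i j
    using that by (simp add: lam_def mu_def nu_def rho_def)
  have zpos: "0 < lam i j \<and> 0 < mu i j \<and> i < j" if "z i j \<noteq> 0" "i < d" "j < d" for i j
  proof -
    have ij: "i < j" using that(1) by (auto simp: z_def split: if_splits)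
    have zN: "z i j = N i j" using ij by (simp add: z_def)
    have pos: "0 < (cmod (N i j))^2" using that(1) zN by simp
    have h1: "0 < a' i j * a' j i * (c' i j * c' j i)" using N1[of i j] pos that ij by linarith
    have h2: "0 < a' i i * a' j j * (c' i j * c' j i)" using N2[of i j] pos that ij by linarith
    have "a' i j \<noteq> 0" "c' j i \<noteq> 0" "a' i i \<noteq> 0" "c' i j \<noteq> 0" using h1 h2 by auto
    then have "0 < a' i j * c' j i" "0 < a' i i * c' i j"
      using ann cnn that by (auto intro!: mult_pos_pos simp: order_le_less)
    then show ?thesis using that(1) ij by (simp add: lam_def mu_def)
  qed

  have bnd: "0 \<le> lam i j \<and> lam i j \<le> (if i < j then a' i j * c' j i else 0)
           \<and> 0 \<le> mu i j \<and> mu i j \<le> (if i < j then a' i i * c' i j else 0)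
           \<and> 0 \<le> nu i j \<and> nu i j \<le> (if i < j then a' j j * c' j i else 0)
           \<and> 0 \<le> rho i j \<and> rho i j \<le> (if i < j then a' j i * c' i j else 0)"
    if "i < d" "j < d" for i j
  proof (cases "z i j = 0")
    case True
    then show ?thesis using zero_cases[OF True] ann cnn that by (auto intro: mult_nonneg_nonneg)
  next
    case False
    from zpos[OF False that] have lp: "0 < lam i j" and mp: "0 < mu i j" and ij: "i < j" by auto
    have zN: "z i j = N i j" using ij by (simp add: z_def)
    have lamv: "lam i j = a' i j * c' j i" and muv: "mu i j = a' i i * c' i j"
      using False by (simp_all add: lam_def mu_def)
    have e1: "(cmod (z i j))^2 \<le> lam i j * (a' j i * c' i j)"
      using N1[of i j] that ij zN lamv by (simp add: mult_ac)
    have e2: "(cmod (z i j))^2 \<le> mu i j * (a' j j * c' j i)"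
      using N2[of i j] that ij zN muv by (simp add: mult_ac)
    have "rho i j \<le> a' j i * c' i j" unfolding rho_def using e1 lp by (simp add: divide_le_eq mult.commute)
    moreover have "nu i j \<le> a' j j * c' j i" unfolding nu_def using e2 mp by (simp add: divide_le_eq mult.commute)
    moreover have "0 \<le> rho i j" "0 \<le> nu i j" using lp mp by (simp_all add: rho_def nu_def)
    ultimately show ?thesis using lp mp ij lamv muv by simp
  qed

  have EBblk: "EBf d (Blk i j)" if "i < d" "j < d" for i j
  proof (cases "z i j = 0")
    case True
    show ?thesis
      by (rule EBf_cong[OF EBf_zero]) (simp add: Blk_def zero_cases[OF True] True)
  next
    case False
    from zpos[OF False that] have lp: "0 < lam i j" and mp: "0 < mu i j" and ij: "i < j" by auto
    define x where "x = sqrt (lam i j)"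
    define y where "y = sqrt (mu i j)"
    define w where "w = cnj (z i j) / (2 * of_real (x * y))"
    have xx: "x * x = lam i j" using lp by (simp add: x_def)
    have yy: "y * y = mu i j" using mp by (simp add: y_def)
    have xp: "x > 0" "y > 0" using lp mp by (simp_all add: x_def y_def)
    have cw: "cmod w = cmod (z i j) / (2 * (x * y))" using xp by (simp add: w_def norm_divide norm_mult)
    have c1: "4 * (cmod w)^2 * (x * x) = nu i j"
      unfolding cw nu_def yy[symmetric] using xp by (simp add: field_simps power2_eq_square)
    have c2: "4 * (cmod w)^2 * (y * y) = rho i j"
      unfolding cw rho_def xx[symmetric] using xp by (simp add: field_simps power2_eq_square)
    have c3: "2 * of_real (x*y) * cnj w = z i j" using xp by (simp add: w_def field_simps)
    have c4: "2 * of_real (x*y) * w = cnj (z i j)" using xp by (simp add: w_def field_simps)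
    have ijd: "i \<noteq> j" using ij by simp
    show ?thesis
    proof (rule EBf_cong[OF GBlk[OF that ijd, of x y w]])
      fix Y a b assume "a < d" "b < d"
      show "Blk i j Y a b = (if a = i \<and> b = i then of_real (x*x) * Y i i + of_real (y*y) * Y j j
         else if a = j \<and> b = j then of_real (4 * (cmod w)^2) * (of_real (x*x) * Y i i + of_real (y*y) * Y j j)
         else if a = i \<and> b = j then 2 * of_real (x*y) * cnj w * Y i j
         else if a = j \<and> b = i then 2 * of_real (x*y) * w * Y j i else 0)"
      proof -
        have c1c: "of_real (4 * (cmod w)^2) * of_real (lam i j) = (of_real (nu i j) :: complex)"
          by (simp only: of_real_mult[symmetric] xx[symmetric] c1)
        have c2c: "of_real (4 * (cmod w)^2) * of_real (mu i j) = (of_real (rho i j) :: complex)"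
          by (simp only: of_real_mult[symmetric] yy[symmetric] c2)
        have e: "of_real (4 * (cmod w)^2) * (of_real (lam i j) * Y i i + of_real (mu i j) * Y j j) = of_real (nu i j) * Y i i + of_real (rho i j) * Y j j"
          by (simp only: distrib_left mult.assoc[symmetric] c1c c2c)
        show ?thesis by (simp only: Blk_def e xx yy c3 c4)
      qed
    qed
  qed
  have EB1: "EBf d (\<lambda>Y a b. \<Sum>p\<in>{..<d}\<times>{..<d}. Blk (fst p) (snd p) Y a b)"
    by (rule EBf_sum) (auto intro: EBblk)

  have Rnn: "0 \<le> R a m" if am: "a < d" "m < d" for a m
  proof (cases "a = m")
    case False
    have "mu a m \<le> (if a < m then a' a a * c' a m else 0)" using bnd[OF am] by simp
    moreover have "nu m a \<le> (if m < a then a' a a * c' a m else 0)" using bnd[of m a] am by simp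
    ultimately have "U a m \<le> a' a a * c' a m" using False
      by (cases "a < m") (auto simp: U_def)
    also have "a' a a * c' a m \<le> (\<Sum>k<d. a' a k * c' k m)"
      by (rule member_le_sum[where f="\<lambda>k. a' a k * c' k m"]) (use am ann cnn in auto)
    finally show ?thesis by (simp add: R_def)
  next
    case True
    have m0: "mu a a = 0" "nu a a = 0" using bnd[OF am(1) am(1)] by auto
    have s1: "(\<Sum>j<d. lam a j) \<le> (\<Sum>k<d. if a < k then a' a k * c' k a else 0)"
      by (rule sum_mono) (use bnd am in auto)
    have s2: "(\<Sum>i<d. rho i a) \<le> (\<Sum>k<d. if k < a then a' a k * c' k a else 0)"
      by (rule sum_mono) (use bnd am in auto)
    have s3: "(\<Sum>k<d. if a < k then a' a k * c' k a else 0) + (\<Sum>k<d. if k < a then a' a k * c' k a else 0)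
        \<le> (\<Sum>k<d. a' a k * c' k a)"
      unfolding sum.distrib[symmetric]
      by (rule sum_mono) (use am ann cnn in \<open>auto intro: mult_nonneg_nonneg\<close>)
    show ?thesis using s1 s2 s3 m0 True by (simp add: R_def U_def)
  qed
  have EB2: "EBf d (\<lambda>Y a b. \<Sum>p\<in>{..<d}\<times>{..<d}. if a = fst p \<and> b = fst p then of_real (R (fst p) (snd p)) * Y (snd p) (snd p) else 0)"
    by (rule EBf_sum) (auto intro!: EBf_diag_single Rnn)
  have EB3: "EBf d (\<lambda>Y a b. (\<Sum>p\<in>{..<d}\<times>{..<d}. Blk (fst p) (snd p) Y a b) +
      (\<Sum>p\<in>{..<d}\<times>{..<d}. if a = fst p \<and> b = fst p then of_real (R (fst p) (snd p)) * Y (snd p) (snd p) else 0))"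
    by (rule EBf_add[OF EB1 EB2])
  show ?thesis
  proof (rule EBf_cong[OF EB3])
    fix Y a b assume ab: "a < d" "b < d"
    show "T2m d (\<lambda>a m. of_real (\<Sum>k<d. a' a k * c' k m)) N Y a b =
      (\<Sum>p\<in>{..<d}\<times>{..<d}. Blk (fst p) (snd p) Y a b) +
      (\<Sum>p\<in>{..<d}\<times>{..<d}. if a = fst p \<and> b = fst p then of_real (R (fst p) (snd p)) * Y (snd p) (snd p) else 0)"
      (is "?L = ?B + ?S")
    proof -
      have B: "?B = (\<Sum>i<d. \<Sum>j<d. Blk i j Y a b)" by (simp add: sum_prod_split)
      have S: "?S = (\<Sum>i<d. \<Sum>m<d. if a = i then (if b = i then of_real (R i m) * Y m m else 0) else 0)"
        by (simp add: sum_prod_split) (intro sum.cong refl, auto)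
      also have "\<dots> = (\<Sum>m<d. if b = a then of_real (R a m) * Y m m else 0)"
        by (rule collapse1[OF ab(1)])
      finally have S2: "?S = (if a = b then (\<Sum>m<d. of_real (R a m) * Y m m) else 0)" by auto
      show ?thesis
      proof (cases "a = b")
        case True
        have blkdiag: "Blk i j Y a a = (if a = i then of_real (lam i j) * Y i i + of_real (mu i j) * Y j j else 0)
             + (if a = j then of_real (nu i j) * Y i i + of_real (rho i j) * Y j j else 0)" for i j
        proof (cases "i = j")
          case True
          then have "z i j = 0" by (simp add: z_def)
          then show ?thesis using zero_cases[of i j] True by (simp add: Blk_def)
        qed (auto simp: Blk_def)
        have "(\<Sum>i<d. \<Sum>j<d. Blk i j Y a a) =
           (\<Sum>i<d. \<Sum>j<d. (if a = i then of_real (lam i j) * Y i i + of_real (mu i j) * Y j j else 0))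
           + (\<Sum>i<d. \<Sum>j<d. (if a = j then of_real (nu i j) * Y i i + of_real (rho i j) * Y j j else 0))"
          unfolding blkdiag by (simp add: sum.distrib)
        also have "\<dots> = (\<Sum>j<d. of_real (lam a j) * Y a a + of_real (mu a j) * Y j j)
             + (\<Sum>i<d. of_real (nu i a) * Y i i + of_real (rho i a) * Y a a)"
          unfolding collapse1[OF ab(1)] collapse2[OF ab(1)] ..
        also have "\<dots> = (\<Sum>m<d. of_real (U a m) * Y m m)"
        proof -
          have "(\<Sum>m<d. of_real (U a m) * Y m m) = (\<Sum>m<d. (if a = m then of_real ((\<Sum>j<d. lam a j) + (\<Sum>i<d. rho i a)) * Y m m else 0)
              + of_real (mu a m) * Y m m + of_real (nu m a) * Y m m)"
            by (intro sum.cong refl) (simp add: U_def distrib_right)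
          also have "\<dots> = of_real ((\<Sum>j<d. lam a j) + (\<Sum>i<d. rho i a)) * Y a a
              + (\<Sum>m<d. of_real (mu a m) * Y m m) + (\<Sum>m<d. of_real (nu m a) * Y m m)"
            unfolding sum.distrib by (subst sum1[of "{..<d}" a]) (use ab in auto)
          finally show ?thesis by (simp add: sum.distrib sum_distrib_left algebra_simps)
        qed
        finally have BU: "(\<Sum>i<d. \<Sum>j<d. Blk i j Y a a) = (\<Sum>m<d. of_real (U a m) * Y m m)" .
        have "?L = (\<Sum>m<d. of_real (U a m + R a m) * Y m m)"
          using True by (simp add: T2m_def R_def)
        also have "\<dots> = (\<Sum>m<d. of_real (U a m) * Y m m) + (\<Sum>m<d. of_real (R a m) * Y m m)"
          by (simp add: sum.distrib distrib_right)
        finally show ?thesis using B S2 BU True by simp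
      next
        case False
        have blkoff: "Blk i j Y a b = (if i = a \<and> j = b then z a b * Y a b else 0)
             + (if i = b \<and> j = a then cnj (z b a) * Y a b else 0)" for i j
          using False by (auto simp: Blk_def)
        have "(\<Sum>i<d. \<Sum>j<d. Blk i j Y a b) = z a b * Y a b + cnj (z b a) * Y a b"
          unfolding blkoff sum.distrib collapse_pt[OF ab] collapse_pt[OF ab(2,1)] ..
        also have "\<dots> = N a b * Y a b"
        proof (cases "a < b")
          case True then show ?thesis by (simp add: z_def)
        next
          case c: False
          then have "b < a" using False by simp
          then show ?thesis using c Nh[of b a] ab by (simp add: z_def)
        qed
        finally show ?thesis using B S2 False by (simp add: T2m_def)
      qed
    qed
  qed
qed

definition hyp :: "nat \<Rightarrow> cmat \<Rightarrow> cmat \<Rightarrow> bool" where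
  "hyp d A B \<longleftrightarrow> (\<forall>i<d. \<forall>j<d. 0 \<le> A i j) \<and> (\<forall>i<d. \<forall>j<d. i \<noteq> j \<longrightarrow> B j i = cnj (B i j))
     \<and> (\<forall>i<d. \<forall>j<d. i \<noteq> j \<longrightarrow> (cmod (B i j))^2 \<le> Re (A i i) * Re (A j j))
     \<and> (\<forall>i<d. \<forall>j<d. i \<noteq> j \<longrightarrow> (cmod (B i j))^2 \<le> Re (A i j) * Re (A j i))"

lemma hyp_transp:
  assumes "hyp d A B" shows "hyp d A (\<lambda>i j. B j i)"
proof -
  have H: "\<forall>i<d. \<forall>j<d. 0 \<le> A i j" "\<forall>i<d. \<forall>j<d. i \<noteq> j \<longrightarrow> B j i = cnj (B i j)"
     "\<forall>i<d. \<forall>j<d. i \<noteq> j \<longrightarrow> (cmod (B i j))^2 \<le> Re (A i i) * Re (A j j)"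
     "\<forall>i<d. \<forall>j<d. i \<noteq> j \<longrightarrow> (cmod (B i j))^2 \<le> Re (A i j) * Re (A j i)"
    using assms unfolding hyp_def by blast+
  show ?thesis unfolding hyp_def
  proof (intro conjI allI impI)
    fix i j assume ij: "i < d" "j < d"
    show "0 \<le> A i j" using H(1) ij by blast
    assume n: "i \<noteq> j"
    show "B i j = cnj (B j i)" using H(2) ij n by blast
    have "(cmod (B j i))^2 \<le> Re (A j j) * Re (A i i)" using H(3) ij n by blast
    then show "(cmod (B j i))^2 \<le> Re (A i i) * Re (A j j)" by (simp add: mult.commute)
    have "(cmod (B j i))^2 \<le> Re (A j i) * Re (A i j)" using H(4) ij n by blast
    then show "(cmod (B j i))^2 \<le> Re (A i j) * Re (A j i)" by (simp add: mult.commute)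
  qed
qed

lemma diag_swap:
  "(\<Sum>k<d. A a k * (\<Sum>m<d. C k m * Y m m)) = (\<Sum>m<d. (\<Sum>k<d. A a k * C k m) * (Y m m :: complex))"
proof -
  have "(\<Sum>k<d. A a k * (\<Sum>m<d. C k m * Y m m)) = (\<Sum>k<d. \<Sum>m<d. A a k * C k m * Y m m)"
    by (simp add: sum_distrib_left mult.assoc)
  also have "\<dots> = (\<Sum>m<d. \<Sum>k<d. A a k * C k m * Y m m)" by (rule sum.swap)
  also have "\<dots> = (\<Sum>m<d. (\<Sum>k<d. A a k * C k m) * Y m m)" by (simp add: sum_distrib_right)
  finally show ?thesis .
qed

lemma core2:
  assumes "hyp d A B" "hyp d C D"
  shows "EBf d (T2m d (\<lambda>a m. \<Sum>k<d. A a k * C k m) (\<lambda>a b. B a b * D a b))"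
proof -
  define a' where "a' i j = Re (A i j)" for i j
  define c' where "c' i j = Re (C i j)" for i j
  have H: "\<forall>i<d. \<forall>j<d. 0 \<le> A i j" "\<forall>i<d. \<forall>j<d. i \<noteq> j \<longrightarrow> B j i = cnj (B i j)"
     "\<forall>i<d. \<forall>j<d. i \<noteq> j \<longrightarrow> (cmod (B i j))^2 \<le> Re (A i i) * Re (A j j)"
     "\<forall>i<d. \<forall>j<d. i \<noteq> j \<longrightarrow> (cmod (B i j))^2 \<le> Re (A i j) * Re (A j i)"
    using assms(1) unfolding hyp_def by blast+
  have K: "\<forall>i<d. \<forall>j<d. 0 \<le> C i j" "\<forall>i<d. \<forall>j<d. i \<noteq> j \<longrightarrow> D j i = cnj (D i j)"
     "\<forall>i<d. \<forall>j<d. i \<noteq> j \<longrightarrow> (cmod (D i j))^2 \<le> Re (C i i) * Re (C j j)"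
     "\<forall>i<d. \<forall>j<d. i \<noteq> j \<longrightarrow> (cmod (D i j))^2 \<le> Re (C i j) * Re (C j i)"
    using assms(2) unfolding hyp_def by blast+
  have Ar: "A i j = of_real (a' i j)" "0 \<le> a' i j" if "i < d" "j < d" for i j
    using H(1) that by (auto simp: a'_def less_eq_complex_def complex_eq_iff)
  have Cr: "C i j = of_real (c' i j)" "0 \<le> c' i j" if "i < d" "j < d" for i j
    using K(1) that by (auto simp: c'_def less_eq_complex_def complex_eq_iff)
  have E: "EBf d (T2m d (\<lambda>a m. of_real (\<Sum>k<d. a' a k * c' k m)) (\<lambda>a b. B a b * D a b))"
  proof (rule core)
    fix i j assume ij: "i < d" "j < d"
    show "0 \<le> a' i j" "0 \<le> c' i j" using Ar Cr ij by auto
    assume n: "i \<noteq> j"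
    have "B j i = cnj (B i j)" "D j i = cnj (D i j)"
      using H(2) K(2) ij n by blast+
    then show "B j i * D j i = cnj (B i j * D i j)" by simp
    have b1: "(cmod (B i j))^2 \<le> a' i j * a' j i" using H(4) ij n by (simp add: a'_def)
    have b2: "(cmod (B i j))^2 \<le> a' i i * a' j j" using H(3) ij n by (simp add: a'_def)
    have d1: "(cmod (D i j))^2 \<le> c' i j * c' j i" using K(4) ij n by (simp add: c'_def)
    have nm: "(cmod (B i j * D i j))^2 = (cmod (B i j))^2 * (cmod (D i j))^2"
      by (simp add: norm_mult power_mult_distrib)
    show "(cmod (B i j * D i j))^2 \<le> a' i j * a' j i * (c' i j * c' j i)"
      unfolding nm by (rule mult_mono[OF b1 d1]) (use Ar ij in auto)
    show "(cmod (B i j * D i j))^2 \<le> a' i i * a' j j * (c' i j * c' j i)"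
      unfolding nm by (rule mult_mono[OF b2 d1]) (use Ar ij in auto)
  qed
  show ?thesis
  proof (rule EBf_cong[OF E])
    fix Y a b assume ab: "a < d" "b < d"
    have eq: "(\<Sum>m<d. (\<Sum>k<d. A a0 k * C k m) * Y m m) = (\<Sum>m<d. of_real (\<Sum>k<d. a' a0 k * c' k m) * Y m m)"
      if "a0 < d" for a0
      using that Ar Cr by (intro sum.cong refl) (simp add: of_real_sum)
    show "T2m d (\<lambda>a m. \<Sum>k<d. A a k * C k m) (\<lambda>a b. B a b * D a b) Y a b =
       T2m d (\<lambda>a m. of_real (\<Sum>k<d. a' a k * c' k m)) (\<lambda>a b. B a b * D a b) Y a b"
      using ab by (simp add: T2m_def eq)
  qed
qed

definition X0 :: "nat \<times> nat \<Rightarrow> nat \<times> nat \<Rightarrow> complex" where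
  "X0 = (\<lambda>(i,a) (j,b). if i = a \<and> j = b then 1 else 0)"

lemma X0_psd: "psd_on ({..<d} \<times> {..<d}) X0"
  unfolding psd_on_def
proof
  fix v :: "nat \<times> nat \<Rightarrow> complex"
  define S where "S = (\<Sum>j<d. v (j,j))"
  have inner: "(\<Sum>j<d. \<Sum>b<d. cnj (v (i,a)) * X0 (i,a) (j,b) * v (j,b)) = (if i = a then cnj (v (i,i)) * S else 0)"
    if "i < d" "a < d" for i a
  proof (cases "i = a")
    case True
    have "(\<Sum>j<d. \<Sum>b<d. cnj (v (i,a)) * X0 (i,a) (j,b) * v (j,b)) = (\<Sum>j<d. \<Sum>b<d. if j = b then cnj (v (i,i)) * v (j,b) else 0)"
      using True by (intro sum.cong refl) (simp add: X0_def)
    also have "\<dots> = (\<Sum>j<d. cnj (v (i,i)) * v (j,j))" by (intro sum.cong refl) simp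
    finally show ?thesis using True by (simp add: S_def sum_distrib_left)
  next
    case False
    then show ?thesis by (simp add: X0_def)
  qed
  have "(\<Sum>p\<in>{..<d} \<times> {..<d}. \<Sum>p'\<in>{..<d} \<times> {..<d}. cnj (v p) * X0 p p' * v p')
      = (\<Sum>i<d. \<Sum>a<d. if i = a then cnj (v (i,i)) * S else 0)"
    unfolding sum_prod_split by (intro sum.cong refl) (simp add: inner)
  also have "\<dots> = (\<Sum>i<d. cnj (v (i,i)) * S)" by (intro sum.cong refl) simp
  also have "\<dots> = cnj S * S" unfolding S_def cnj_sum by (rule sum_distrib_right[symmetric])
  also have "\<dots> = S * cnj S" by (rule mult.commute)
  finally show "0 \<le> (\<Sum>p\<in>{..<d} \<times> {..<d}. \<Sum>p'\<in>{..<d} \<times> {..<d}. cnj (v p) * X0 p p' * v p')"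
    using cnj_nonneg by simp
qed

lemma choi_entry:
  assumes "i < d" "j < d"
  shows "ampl d \<Phi> X0 (i,a) (j,b) = \<Phi> (\<lambda>a' b'. if a' = i \<and> b' = j then 1 else 0) a b"
proof -
  have "(\<lambda>a' b'. if a' < d \<and> b' < d then X0 (i, a') (j, b') else 0) = (\<lambda>a' b'. if a' = i \<and> b' = j then 1 else 0)"
    using assms by (auto simp: X0_def fun_eq_iff)
  then show ?thesis by (simp add: ampl_def)
qed

lemma dd1:
  fixes d :: nat
  assumes "j < d"
  shows "(\<Sum>k<d. A a k * (if k = j then 1 else 0)) = (A a j :: complex)"
  by (subst sum1[of "{..<d}" j]) (use assms in auto)

lemma dd0:
  fixes d :: nat
  assumes "i \<noteq> j"
  shows "(\<Sum>k<d. A a k * (if k = i \<and> k = j then 1 else 0)) = (0 :: complex)"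
  using assms by (intro sum.neutral) auto

lemma extract_hyp:
  assumes P1: "completely_positive d (Phi1 d A B)" and P2: "completely_positive d (Phi2 d A B)"
  shows "hyp d A B"
proof -
  let ?I = "{..<d} \<times> {..<d}"
  have J1: "psd_on ?I (ampl d (Phi1 d A B) X0)" using P1 X0_psd unfolding completely_positive_def by blast
  have J2: "psd_on ?I (ampl d (Phi2 d A B) X0)" using P2 X0_psd unfolding completely_positive_def by blast
  have fin: "finite ?I" by simp
  show ?thesis unfolding hyp_def
  proof (intro conjI allI impI)
    fix i j assume ij: "i < d" "j < d"
    have "0 \<le> ampl d (Phi2 d A B) X0 (j,i) (j,i)" by (rule psd1[OF J2 fin]) (use ij in auto)
    then show "0 \<le> A i j" using ij by (simp add: choi_entry Phi2_def dd1 dd0)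
  next
    fix i j assume ij: "i < d" "j < d" and n: "i \<noteq> j"
    have xy: "(i,i) \<in> ?I" "(j,j) \<in> ?I" "(i,i) \<noteq> (j,j)" using ij n by auto
    have e1: "ampl d (Phi2 d A B) X0 (i,i) (j,j) = B i j" using ij n by (simp add: choi_entry Phi2_def)
    have e2: "ampl d (Phi2 d A B) X0 (j,j) (i,i) = B j i" using ij n by (simp add: choi_entry Phi2_def)
    have e3: "ampl d (Phi2 d A B) X0 (i,i) (i,i) = A i i" using ij by (simp add: choi_entry Phi2_def dd1 dd0)
    have e4: "ampl d (Phi2 d A B) X0 (j,j) (j,j) = A j j" using ij by (simp add: choi_entry Phi2_def dd1 dd0)
    show "B j i = cnj (B i j)" using psd2(1)[OF J2 fin xy] e1 e2 by simp
    show "(cmod (B i j))^2 \<le> Re (A i i) * Re (A j j)" using psd2(2)[OF J2 fin xy] e1 e3 e4 by simp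
    have xy': "(j,i) \<in> ?I" "(i,j) \<in> ?I" "(j,i) \<noteq> (i,j)" using ij n by auto
    have f1: "ampl d (Phi1 d A B) X0 (j,i) (i,j) = B i j" using ij n by (simp add: choi_entry Phi1_def)
    have f3: "ampl d (Phi1 d A B) X0 (j,i) (j,i) = A i j" using ij by (simp add: choi_entry Phi1_def dd1 dd0)
    have f4: "ampl d (Phi1 d A B) X0 (i,j) (i,j) = A j i" using ij by (simp add: choi_entry Phi1_def dd1 dd0)
    show "(cmod (B i j))^2 \<le> Re (A i j) * Re (A j i)" using psd2(2)[OF J1 fin xy'] f1 f3 f4 by simp
  qed
qed

abbreviation MM :: "nat \<Rightarrow> cmat \<Rightarrow> cmat \<Rightarrow> cmat" where
  "MM d A C \<equiv> (\<lambda>a m. \<Sum>k<d. A a k * C k m)"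

lemma comp11: "(Phi1 d A B \<circ> Phi1 d C D) Y a b = T2m d (MM d A C) (\<lambda>a b. B a b * (\<lambda>i j. D j i) a b) Y a b"
  by (cases "a = b") (simp_all add: Phi1_def T2m_def diag_swap)

lemma comp12: "(Phi1 d A B \<circ> Phi2 d C D) Y a b = T2m d (MM d A C) (\<lambda>a b. (\<lambda>i j. B j i) a b * D a b) Y b a"
  by (cases "a = b") (simp_all add: Phi1_def Phi2_def T2m_def diag_swap mult.assoc)

lemma comp21: "(Phi2 d A B \<circ> Phi1 d C D) Y a b = T2m d (MM d A C) (\<lambda>a b. (\<lambda>i j. B j i) a b * (\<lambda>i j. D j i) a b) Y b a"
  by (cases "a = b") (simp_all add: Phi1_def Phi2_def T2m_def diag_swap mult.assoc)

lemma comp22: "(Phi2 d A B \<circ> Phi2 d C D) Y a b = T2m d (MM d A C) (\<lambda>a b. B a b * D a b) Y a b"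
  by (cases "a = b") (simp_all add: Phi2_def T2m_def diag_swap)

theorem theorem4p5:
  fixes d :: nat and A B C D :: cmat
  assumes diagAB: "\<forall>i<d. A i i = B i i"
      and diagCD: "\<forall>i<d. C i i = D i i"
      and P1AB: "PPT d (Phi1 d A B)" and P2AB: "PPT d (Phi2 d A B)"
      and P1CD: "PPT d (Phi1 d C D)" and P2CD: "PPT d (Phi2 d C D)"
  shows "entanglement_breaking d (Phi1 d A B \<circ> Phi1 d C D)
       \<and> entanglement_breaking d (Phi1 d A B \<circ> Phi2 d C D)
       \<and> entanglement_breaking d (Phi2 d A B \<circ> Phi1 d C D)
       \<and> entanglement_breaking d (Phi2 d A B \<circ> Phi2 d C D)"
proof -
  have hAB: "hyp d A B"
    using P1AB P2AB unfolding PPT_def by (intro extract_hyp) auto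
  have hCD: "hyp d C D"
    using P1CD P2CD unfolding PPT_def by (intro extract_hyp) auto
  have e11: "EBf d (Phi1 d A B \<circ> Phi1 d C D)"
    by (rule EBf_cong[OF core2[OF hAB hyp_transp[OF hCD]]]) (rule comp11)
  have e12: "EBf d (Phi1 d A B \<circ> Phi2 d C D)"
    by (rule EBf_cong[OF EBf_transp[OF core2[OF hyp_transp[OF hAB] hCD]]]) (rule comp12)
  have e21: "EBf d (Phi2 d A B \<circ> Phi1 d C D)"
    by (rule EBf_cong[OF EBf_transp[OF core2[OF hyp_transp[OF hAB] hyp_transp[OF hCD]]]]) (rule comp21)
  have e22: "EBf d (Phi2 d A B \<circ> Phi2 d C D)"
    by (rule EBf_cong[OF core2[OF hAB hCD]]) (rule comp22)
  show ?thesis using e11 e12 e21 e22 by (simp add: EBf_EB)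
qed

end
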